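(* The following Schur norms hold. (1) $\|[1]\|_\bullet=1$. (2) $\left\|\begin{bmatrix}1&1\\0&1\end{bmatrix}\right\|_\bullet=\left\|\begin{bmatrix}1&1&0\\0&1&1\end{bmatrix}\right\|_\bullet=\sqrt{4/3}$. (3) $\left\|\begin{bmatrix}1&1&0\\0&1&1\\0&0&1\end{bmatrix}\right\|_\bullet=\left\|\begin{bmatrix}1&1&0&0\\0&1&1&0\\0&0&1&1\end{bmatrix}\right\|_\bullet=\left\|\begin{bmatrix}1&1&0&0\\1&0&1&0\\0&1&0&1\\0&0&1&1\end{bmatrix}\right\|_\bullet=\frac{1+\sqrt2}{2}$. (4) $\left\|\begin{bmatrix}1&0&0\\1&1&1\\0&0&1\end{bmatrix}\right\|_\bullet=\left\|\begin{bmatrix}1&0&0&1&0\\1&1&1&0&0\\0&0&1&0&1\end{bmatrix}\right\|_\bullet=\frac1{15}\sqrt{169+38\sqrt{19}}$. (5) $\left\|\begin{bmatrix}1&1&0&0\\1&0&1&0\\1&0&0&1\end{bmatrix}\right\|_\bullet=\sqrt{3/2}$. (6) $\left\|\begin{bmatrix}1&1&0&0\\0&1&1&0\\0&0&1&1\\0&0&0&1\end{bmatrix}\right\|_\bullet=\left\|\begin{bmatrix}1&1&0&0&0\\0&1&1&0&0\\0&0&1&1&0\\0&0&0&1&1\end{bmatrix}\right\|_\bullet=\frac25\sqrt{5+2\sqrt5}$. (7) $\left\|\begin{bmatrix}1&1&0\\1&1&1\\0&1&0\end{bmatrix}\right\|_\bullet=\frac1{15}(9+4\sqrt6)$. (8)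 $\left\|\begin{bmatrix}1&1&0\\1&1&1\\0&1&1\end{bmatrix}\right\|_\bullet=9/7$. (9) $\left\|\begin{bmatrix}1&1&0\\1&0&1\\0&1&1\end{bmatrix}\right\|_\bullet=4/3$.
   Context: Fix $\mathbb F\in\{\mathbb R,\mathbb C\}$. For an $m\times n$ matrix $A$ with entries in $\mathbb F$, the Schur norm is $\|A\|_\bullet=\sup\{\|A\bullet X\|: X\in M_{m,n}(\mathbb F),\ \|X\|\le1\}$, where $A\bullet X=[a_{ij}x_{ij}]$ is the entrywise product and $\|\cdot\|$ is the operator norm $\ell^2_n\to\ell^2_m$. *)

theory Defs
  imports Complex_Main
begin

text \<open>Matrices of size m x n over a field 'a (instantiated to real or complex)
are represented as functions nat => nat => 'a, only the entries with
i < m, j < n being relevant.\<close>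

definition vec_norm :: "nat \<Rightarrow> (nat \<Rightarrow> 'a::real_normed_field) \<Rightarrow> real" where
  "vec_norm n v = sqrt (\<Sum>j<n. (norm (v j))^2)"

definition mat_vec :: "nat \<Rightarrow> (nat \<Rightarrow> nat \<Rightarrow> 'a::real_normed_field) \<Rightarrow> (nat \<Rightarrow> 'a) \<Rightarrow> (nat \<Rightarrow> 'a)" where
  "mat_vec n X v = (\<lambda>i. \<Sum>j<n. X i j * v j)"

definition op_norm :: "nat \<Rightarrow> nat \<Rightarrow> (nat \<Rightarrow> nat \<Rightarrow> 'a::real_normed_field) \<Rightarrow> real" where
  "op_norm m n X = Sup {vec_norm m (mat_vec n X v) | v. vec_norm n v \<le> 1}"

definition schur_prod :: "(nat \<Rightarrow> nat \<Rightarrow> 'a::real_normed_field) \<Rightarrow> (nat \<Rightarrow> nat \<Rightarrow> 'a) \<Rightarrow> (nat \<Rightarrow> nat \<Rightarrow> 'a)" where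
  "schur_prod A X = (\<lambda>i j. A i j * X i j)"

definition schur_norm :: "nat \<Rightarrow> nat \<Rightarrow> (nat \<Rightarrow> nat \<Rightarrow> 'a::real_normed_field) \<Rightarrow> real" where
  "schur_norm m n A = Sup {op_norm m n (schur_prod A X) | X. op_norm m n X \<le> 1}"

definition mat_of_rows :: "real list list \<Rightarrow> nat \<Rightarrow> nat \<Rightarrow> 'a::real_normed_field" where
  "mat_of_rows rows = (\<lambda>i j. of_real (rows ! i ! j))"

definition schur_norm_rows :: "'a::real_normed_field itself \<Rightarrow> real list list \<Rightarrow> real" where
  "schur_norm_rows _ rows =
     schur_norm (length rows) (length (hd rows)) (mat_of_rows rows :: nat \<Rightarrow> nat \<Rightarrow> 'a)"

definition schur_norm_is :: "real list list \<Rightarrow> real \<Rightarrow> bool" where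
  "schur_norm_is rows c \<longleftrightarrow>
     schur_norm_rows TYPE(real) rows = c \<and> schur_norm_rows TYPE(complex) rows = c"

end

theory Submission
  imports Defs "HOL-Analysis.Analysis"
begin


lemma vec_norm_nonneg: "0 \<le> vec_norm n v" by (simp add: vec_norm_def sum_nonneg)

lemma vec_norm_sq: "(vec_norm n v)^2 = (\<Sum>j<n. (norm (v j))^2)"
  unfolding vec_norm_def by (simp add: sum_nonneg)

lemma sum_sq_le_sq_sum:
  fixes f :: "'b \<Rightarrow> real"
  assumes "finite S" "\<And>x. x \<in> S \<Longrightarrow> 0 \<le> f x"
  shows "(\<Sum>x\<in>S. (f x)^2) \<le> (\<Sum>x\<in>S. f x)^2"
  using assms
proof (induction S rule: finite_induct)
  case empty then show ?case by simp
next
  case (insert x F)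
  have "0 \<le> (\<Sum>y\<in>F. f y)" using insert by (simp add: sum_nonneg)
  moreover have "0 \<le> f x" using insert by simp
  ultimately have "0 \<le> 2 * f x * (\<Sum>y\<in>F. f y)" by simp
  then show ?case using insert by (simp add: power2_sum)
qed

lemma norm_le_vec_norm: assumes "j < n" shows "norm (v j) \<le> vec_norm n v"
proof -
  have "(norm (v j))^2 \<le> (\<Sum>j<n. (norm (v j))^2)"
    by (rule member_le_sum) (use assms in auto)
  then have "sqrt ((norm (v j))^2) \<le> vec_norm n v" unfolding vec_norm_def
    by (rule real_sqrt_le_mono)
  then show ?thesis by simp
qed

lemma mat_vec_bound:
  "vec_norm m (mat_vec n X v) \<le> (\<Sum>i<m. \<Sum>j<n. norm (X i j)) * vec_norm n v"
proof -
  let ?N = "vec_norm n v"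
  have row: "norm (mat_vec n X v i) \<le> (\<Sum>j<n. norm (X i j)) * ?N" for i
  proof -
    have "norm (mat_vec n X v i) \<le> (\<Sum>j<n. norm (X i j * v j))"
      unfolding mat_vec_def by (rule norm_sum)
    also have "\<dots> \<le> (\<Sum>j<n. norm (X i j) * ?N)"
      by (rule sum_mono) (auto simp: norm_mult intro!: mult_left_mono norm_le_vec_norm)
    finally show ?thesis by (simp add: sum_distrib_right)
  qed
  have "vec_norm m (mat_vec n X v) = sqrt (\<Sum>i<m. (norm (mat_vec n X v i))^2)"
    by (simp add: vec_norm_def)
  also have "\<dots> \<le> sqrt ((\<Sum>i<m. norm (mat_vec n X v i))^2)"
    by (rule real_sqrt_le_mono, rule sum_sq_le_sq_sum) auto
  also have "\<dots> = (\<Sum>i<m. norm (mat_vec n X v i))" by (simp add: sum_nonneg)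
  also have "\<dots> \<le> (\<Sum>i<m. (\<Sum>j<n. norm (X i j)) * ?N)" by (rule sum_mono) (rule row)
  finally show ?thesis by (simp add: sum_distrib_right)
qed

lemma op_norm_bdd: "bdd_above {vec_norm m (mat_vec n X v) | v. vec_norm n v \<le> 1}"
proof -
  let ?K = "(\<Sum>i<m. \<Sum>j<n. norm (X i j))"
  have K: "0 \<le> ?K" by (simp add: sum_nonneg)
  show ?thesis
  proof (rule bdd_aboveI)
    fix x assume "x \<in> {vec_norm m (mat_vec n X v) | v. vec_norm n v \<le> 1}"
    then obtain v where "x = vec_norm m (mat_vec n X v)" "vec_norm n v \<le> 1" by auto
    then show "x \<le> ?K" using mat_vec_bound[of m n X v] K
      by (smt (verit) mult_left_le)
  qed
qed

lemma op_norm_upper: "vec_norm n v \<le> 1 \<Longrightarrow> vec_norm m (mat_vec n X v) \<le> op_norm m n X"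
  unfolding op_norm_def by (rule cSup_upper) (auto intro: op_norm_bdd)

lemma op_norm_least:
  assumes "\<And>v. vec_norm n v \<le> 1 \<Longrightarrow> vec_norm m (mat_vec n X v) \<le> c"
  shows "op_norm m n X \<le> c"
  unfolding op_norm_def
proof (rule cSup_least)
  show "{vec_norm m (mat_vec n X v) |v. vec_norm n v \<le> 1} \<noteq> {}"
  proof -
    have "vec_norm n (\<lambda>_. 0::'a) \<le> 1" by (simp add: vec_norm_def)
    then show ?thesis by blast
  qed
qed (use assms in auto)

lemma vec_norm_scale: "vec_norm n (\<lambda>j. of_real r * v j) = \<bar>r\<bar> * vec_norm n v"
proof -
  have "vec_norm n (\<lambda>j. of_real r * v j) = sqrt (r^2 * (\<Sum>j<n. (norm (v j))^2))"
    by (simp add: vec_norm_def norm_mult power_mult_distrib sum_distrib_left)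
  also have "\<dots> = \<bar>r\<bar> * vec_norm n v" by (simp add: vec_norm_def real_sqrt_mult)
  finally show ?thesis .
qed

lemma mat_vec_scale: "mat_vec n X (\<lambda>j. of_real r * v j) = (\<lambda>i. of_real r * mat_vec n X v i)"
  unfolding mat_vec_def by (auto simp: sum_distrib_left intro!: sum.cong simp: ac_simps)

lemma vec_norm_zero_imp:
  assumes "vec_norm n v = 0" "j < n" shows "v j = 0"
  using norm_le_vec_norm[OF assms(2), of v] assms(1) by simp

lemma op_norm_le1_imp:
  assumes "op_norm m n X \<le> 1"
  shows "vec_norm m (mat_vec n X v) \<le> vec_norm n v"
proof (cases "vec_norm n v = 0")
  case True
  then have "mat_vec n X v = (\<lambda>_. 0)" unfolding mat_vec_def
    by (auto intro!: ext sum.neutral dest: vec_norm_zero_imp)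
  then show ?thesis by (simp add: vec_norm_def sum_nonneg)
next
  case False
  let ?N = "vec_norm n v"
  have Np: "0 < ?N" using False vec_norm_nonneg[of n v] by linarith
  have "vec_norm n (\<lambda>j. of_real (1/?N) * v j) = \<bar>1/?N\<bar> * ?N" by (rule vec_norm_scale)
  then have "vec_norm n (\<lambda>j. of_real (1/?N) * v j) = 1" using Np by simp
  then have "vec_norm m (mat_vec n X (\<lambda>j. of_real (1/?N) * v j)) \<le> 1"
    using op_norm_upper[of n "\<lambda>j. of_real (1/?N) * v j" m X] assms by simp
  moreover have "vec_norm m (mat_vec n X (\<lambda>j. of_real (1/?N) * v j)) = \<bar>1/?N\<bar> * vec_norm m (mat_vec n X v)"
    unfolding mat_vec_scale by (rule vec_norm_scale)
  ultimately have "(1/?N) * vec_norm m (mat_vec n X v) \<le> 1"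
    using Np by simp
  then show ?thesis using Np by (simp add: field_simps)
qed

lemma op_norm_le_of_bound:
  assumes "\<And>v. vec_norm m (mat_vec n X v) \<le> c * vec_norm n v" "0 \<le> c"
  shows "op_norm m n X \<le> c"
proof (rule op_norm_least)
  fix v assume "vec_norm n (v::nat \<Rightarrow> 'a) \<le> 1"
  then have "c * vec_norm n v \<le> c" using assms(2) by (simp add: mult_left_le)
  then show "vec_norm m (mat_vec n X v) \<le> c" using assms(1)[of v] by linarith
qed

lemma op_norm_zero: "op_norm m n (\<lambda>_ _. 0) \<le> 1"
  by (rule op_norm_le_of_bound) (auto simp: mat_vec_def vec_norm_def sum_nonneg)

lemma schur_norm_le:
  assumes "\<And>X. op_norm m n X \<le> 1 \<Longrightarrow> op_norm m n (schur_prod A X) \<le> c"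
  shows "schur_norm m n A \<le> c"
  unfolding schur_norm_def
  by (rule cSup_least) (use assms op_norm_zero in auto)

lemma schur_norm_ge:
  assumes "\<And>X. op_norm m n X \<le> 1 \<Longrightarrow> op_norm m n (schur_prod A X) \<le> c"
    and "op_norm m n X0 \<le> 1" "c \<le> op_norm m n (schur_prod A X0)"
  shows "c \<le> schur_norm m n A"
proof -
  have "op_norm m n (schur_prod A X0) \<le> schur_norm m n A"
    unfolding schur_norm_def
    by (rule cSup_upper) (use assms in \<open>auto intro!: bdd_aboveI\<close>)
  then show ?thesis using assms(3) by linarith
qed



lemma weighted_cs:
  fixes d p :: "nat \<Rightarrow> real" and y :: "nat \<Rightarrow> 'a::real_normed_field"
  assumes "\<And>k. k < r \<Longrightarrow> 0 \<le> d k"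
  shows "(norm (\<Sum>k<r. of_real (d k * p k) * y k))^2 \<le> (\<Sum>k<r. d k * (p k)^2) * (\<Sum>k<r. d k * (norm (y k))^2)"
proof -
  have "norm (\<Sum>k<r. of_real (d k * p k) * y k) \<le> (\<Sum>k<r. norm (of_real (d k * p k) * y k))"
    by (rule norm_sum)
  also have "\<dots> = (\<Sum>k<r. (sqrt (d k) * \<bar>p k\<bar>) * (sqrt (d k) * norm (y k)))"
    using assms by (intro sum.cong) (auto simp: norm_mult abs_mult)
  finally have 1: "norm (\<Sum>k<r. of_real (d k * p k) * y k) \<le> (\<Sum>k<r. (sqrt (d k) * \<bar>p k\<bar>) * (sqrt (d k) * norm (y k)))" .
  have "(norm (\<Sum>k<r. of_real (d k * p k) * y k))^2 \<le> (\<Sum>k<r. (sqrt (d k) * \<bar>p k\<bar>) * (sqrt (d k) * norm (y k)))^2"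
    by (rule power_mono[OF 1]) simp
  also have "\<dots> \<le> (\<Sum>k<r. (sqrt (d k) * \<bar>p k\<bar>)^2) * (\<Sum>k<r. (sqrt (d k) * norm (y k))^2)"
    by (rule Cauchy_Schwarz_ineq_sum)
  also have "\<dots> = (\<Sum>k<r. d k * (p k)^2) * (\<Sum>k<r. d k * (norm (y k))^2)"
    using assms by (simp add: power_mult_distrib)
  finally show ?thesis .
qed

lemma upper_core:
  fixes Ar :: "nat \<Rightarrow> nat \<Rightarrow> real" and d :: "nat \<Rightarrow> real" and p q :: "nat \<Rightarrow> nat \<Rightarrow> real"
  assumes fac: "\<And>i j. i < m \<Longrightarrow> j < n \<Longrightarrow> Ar i j = (\<Sum>k<r. d k * p i k * q k j)"
    and dnn: "\<And>k. k < r \<Longrightarrow> 0 \<le> d k"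
    and rowb: "\<And>i. i < m \<Longrightarrow> (\<Sum>k<r. d k * (p i k)^2) \<le> \<alpha>"
    and colb: "\<And>j. j < n \<Longrightarrow> (\<Sum>k<r. d k * (q k j)^2) \<le> \<beta>"
    and ab: "0 \<le> \<alpha>" "\<alpha> * \<beta> \<le> c^2" "0 \<le> c"
    and X: "op_norm m n (X::nat\<Rightarrow>nat\<Rightarrow>'a::real_normed_field) \<le> 1"
  shows "op_norm m n (schur_prod (\<lambda>i j. of_real (Ar i j)) X) \<le> c"
proof (rule op_norm_le_of_bound[OF _ ab(3)])
  fix v :: "nat \<Rightarrow> 'a"
  define y where "y k = mat_vec n X (\<lambda>j. of_real (q k j) * v j)" for k
  let ?AX = "schur_prod (\<lambda>i j. of_real (Ar i j)) X"
  have comp: "mat_vec n ?AX v i = (\<Sum>k<r. of_real (d k * p i k) * y k i)" if "i < m" for i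
  proof -
    have "mat_vec n ?AX v i = (\<Sum>j<n. \<Sum>k<r. of_real (d k * p i k) * (X i j * (of_real (q k j) * v j)))"
      unfolding mat_vec_def schur_prod_def
      by (intro sum.cong refl) (simp add: fac[OF that] of_real_sum sum_distrib_right sum_distrib_left ac_simps)
    also have "\<dots> = (\<Sum>k<r. of_real (d k * p i k) * y k i)"
      unfolding y_def mat_vec_def by (subst sum.swap) (simp add: sum_distrib_left)
    finally show ?thesis .
  qed
  have yb: "(vec_norm m (y k))^2 \<le> (\<Sum>j<n. (q k j)^2 * (norm (v j))^2)" for k
  proof -
    have "vec_norm m (y k) \<le> vec_norm n (\<lambda>j. of_real (q k j) * v j)"
      unfolding y_def by (rule op_norm_le1_imp[OF X])
    then have "(vec_norm m (y k))^2 \<le> (vec_norm n (\<lambda>j. of_real (q k j) * v j))^2"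
      by (rule power_mono) (rule vec_norm_nonneg)
    then show ?thesis by (simp add: vec_norm_sq norm_mult power_mult_distrib)
  qed
  have "(vec_norm m (mat_vec n ?AX v))^2 = (\<Sum>i<m. (norm (\<Sum>k<r. of_real (d k * p i k) * y k i))^2)"
    by (simp add: vec_norm_sq comp)
  also have "\<dots> \<le> (\<Sum>i<m. \<alpha> * (\<Sum>k<r. d k * (norm (y k i))^2))"
  proof (rule sum_mono)
    fix i assume i: "i \<in> {..<m}"
    have "(norm (\<Sum>k<r. of_real (d k * p i k) * y k i))^2 \<le> (\<Sum>k<r. d k * (p i k)^2) * (\<Sum>k<r. d k * (norm (y k i))^2)"
      by (rule weighted_cs) (rule dnn)
    also have "\<dots> \<le> \<alpha> * (\<Sum>k<r. d k * (norm (y k i))^2)"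
      by (rule mult_right_mono) (use rowb i dnn in \<open>auto intro!: sum_nonneg\<close>)
    finally show "(norm (\<Sum>k<r. of_real (d k * p i k) * y k i))^2 \<le> \<alpha> * (\<Sum>k<r. d k * (norm (y k i))^2)" .
  qed
  also have "\<dots> = \<alpha> * (\<Sum>k<r. d k * (vec_norm m (y k))^2)"
    by (simp add: vec_norm_sq sum_distrib_left sum_distrib_right ac_simps) (subst sum.swap, simp)
  also have "\<dots> \<le> \<alpha> * (\<Sum>k<r. d k * (\<Sum>j<n. (q k j)^2 * (norm (v j))^2))"
    by (intro mult_left_mono[OF _ ab(1)] sum_mono) (use dnn yb in \<open>auto intro: mult_left_mono\<close>)
  also have "\<dots> = \<alpha> * (\<Sum>j<n. (\<Sum>k<r. d k * (q k j)^2) * (norm (v j))^2)"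
    by (simp add: sum_distrib_left sum_distrib_right ac_simps) (subst sum.swap, simp)
  also have "\<dots> \<le> \<alpha> * (\<Sum>j<n. \<beta> * (norm (v j))^2)"
    by (intro mult_left_mono[OF _ ab(1)] sum_mono mult_right_mono) (auto intro: colb)
  also have "\<dots> = (\<alpha> * \<beta>) * (vec_norm n v)^2"
    by (simp add: vec_norm_sq sum_distrib_left mult.assoc)
  also have "\<dots> \<le> c^2 * (vec_norm n v)^2"
    by (rule mult_right_mono[OF ab(2)]) simp
  finally have "(vec_norm m (mat_vec n ?AX v))^2 \<le> (c * vec_norm n v)^2"
    by (simp add: power_mult_distrib)
  then show "vec_norm m (mat_vec n ?AX v) \<le> c * vec_norm n v"
    by (rule power2_le_imp_le) (use ab(3) vec_norm_nonneg[of n v] in simp)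
qed



lemma normsq_comb:
  fixes t :: "nat \<Rightarrow> 'a::{real_normed_algebra_1,real_inner}"
  shows "(norm (\<Sum>j<n. of_real (r j) * t j))^2 = (\<Sum>j<n. \<Sum>l<n. r j * r l * inner (t j) (t l))"
proof -
  have "(\<Sum>j<n. of_real (r j) * t j) = (\<Sum>j<n. r j *\<^sub>R t j)" by (simp add: scaleR_conv_of_real)
  then show ?thesis
    by (simp add: power2_norm_eq_inner inner_sum_left inner_sum_right sum_distrib_left ac_simps inner_commute)
qed

lemma lower_core:
  fixes Ar Z :: "nat \<Rightarrow> nat \<Rightarrow> real" and d :: "nat \<Rightarrow> real" and W :: "nat \<Rightarrow> nat \<Rightarrow> real"
  fixes a b :: "nat \<Rightarrow> real"
  assumes apos: "\<And>i. i < m \<Longrightarrow> 0 \<le> a i"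
    and bnn: "\<And>j. j < n \<Longrightarrow> 0 \<le> b j"
    and bz: "\<And>i j. i < m \<Longrightarrow> j < n \<Longrightarrow> b j = 0 \<Longrightarrow> Z i j = 0"
    and dnn: "\<And>k. k < r \<Longrightarrow> 0 \<le> d k"
    and psd: "\<And>j l. j < n \<Longrightarrow> l < n \<Longrightarrow>
       (if j = l then b j else 0) = c^2 * (\<Sum>i<m. Z i j * Z i l / a i) + (\<Sum>k<r. d k * W k j * W k l)"
    and val: "(\<Sum>i<m. (\<Sum>j<n. Ar i j * Z i j)^2 / a i) = 1"
    and bsum: "(\<Sum>j<n. b j) = 1"
    and c: "0 \<le> c"
  shows "\<exists>X::nat\<Rightarrow>nat\<Rightarrow>'a::{real_normed_field,real_inner}.
     op_norm m n X \<le> 1 \<and> c \<le> op_norm m n (schur_prod (\<lambda>i j. of_real (Ar i j)) X)"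
proof -
  define X :: "nat\<Rightarrow>nat\<Rightarrow>'a" where "X i j = of_real (c * Z i j / (sqrt (a i) * sqrt (b j)))" for i j
  have contr: "vec_norm m (mat_vec n X v) \<le> vec_norm n v" for v
  proof -
    define t where "t j = of_real (1 / sqrt (b j)) * v j" for j
    define S where "S i = (\<Sum>j<n. of_real (Z i j) * t j)" for i
    define In where "In j l = inner (t j) (t l)" for j l
    have mv: "mat_vec n X v i = of_real (c / sqrt (a i)) * S i" for i
      unfolding mat_vec_def X_def S_def t_def sum_distrib_left
      by (intro sum.cong refl) (simp add: field_simps)
    have eqA: "(\<Sum>j<n. \<Sum>l<n. (if j = l then b j else 0) * In j l) = (\<Sum>j<n. b j * In j j)"
    proof (intro sum.cong refl)
      fix j assume "j \<in> {..<n}"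
      have "(\<Sum>l<n. (if j = l then b j else 0) * In j l) = (\<Sum>l<n. (if j = l then b j * In j j else 0))"
        by (intro sum.cong refl) auto
      also have "\<dots> = b j * In j j" using \<open>j \<in> {..<n}\<close> by (simp add: sum.delta)
      finally show "(\<Sum>l<n. (if j = l then b j else 0) * In j l) = b j * In j j" .
    qed
    have eqB: "(\<Sum>j<n. \<Sum>l<n. (\<Sum>k<r. d k * W k j * W k l) * In j l) = (\<Sum>k<r. d k * (\<Sum>j<n. \<Sum>l<n. W k j * W k l * In j l))"
      by (simp add: sum_distrib_left sum_distrib_right ac_simps) (subst sum.swap, subst (2) sum.swap, simp add: ac_simps)
    have "(vec_norm m (mat_vec n X v))^2 = (\<Sum>i<m. c^2 / a i * (norm (S i))^2)"
      unfolding vec_norm_sq mv using apos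
      by (intro sum.cong refl) (simp add: norm_mult norm_divide power_mult_distrib power_divide less_imp_le)
    also have "\<dots> = (\<Sum>i<m. c^2 / a i * (\<Sum>j<n. \<Sum>l<n. Z i j * Z i l * In j l))"
      unfolding S_def In_def normsq_comb by simp
    also have "\<dots> = (\<Sum>j<n. \<Sum>l<n. (c^2 * (\<Sum>i<m. Z i j * Z i l / a i)) * In j l)"
      by (simp add: sum_distrib_left sum_distrib_right ac_simps) (subst sum.swap, subst (2) sum.swap, simp add: ac_simps)
    also have "\<dots> = (\<Sum>j<n. \<Sum>l<n. ((if j = l then b j else 0) - (\<Sum>k<r. d k * W k j * W k l)) * In j l)"
      by (intro sum.cong refl) (simp add: psd)
    also have "\<dots> = (\<Sum>j<n. \<Sum>l<n. (if j = l then b j else 0) * In j l) - (\<Sum>j<n. \<Sum>l<n. (\<Sum>k<r. d k * W k j * W k l) * In j l)"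
      by (simp add: left_diff_distrib sum_subtractf)
    also have "\<dots> = (\<Sum>j<n. b j * In j j) - (\<Sum>k<r. d k * (\<Sum>j<n. \<Sum>l<n. W k j * W k l * In j l))"
      by (simp only: eqA eqB)
    also have "\<dots> \<le> (\<Sum>j<n. b j * In j j)"
    proof -
      have "0 \<le> (\<Sum>k<r. d k * (\<Sum>j<n. \<Sum>l<n. W k j * W k l * In j l))"
      proof (rule sum_nonneg)
        fix k assume "k \<in> {..<r}"
        then have "0 \<le> d k" using dnn by simp
        moreover have "0 \<le> (\<Sum>j<n. \<Sum>l<n. W k j * W k l * In j l)"
          unfolding In_def normsq_comb[symmetric] by simp
        ultimately show "0 \<le> d k * (\<Sum>j<n. \<Sum>l<n. W k j * W k l * In j l)" by simp
      qed
      then show ?thesis by linarith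
    qed
    also have "\<dots> \<le> (\<Sum>j<n. (norm (v j))^2)"
    proof (rule sum_mono)
      fix j assume j: "j \<in> {..<n}"
      show "b j * In j j \<le> (norm (v j))^2"
      proof (cases "b j = 0")
        case True then show ?thesis by simp
      next
        case False
        then have "0 < b j" using bnn j by force
        then show ?thesis unfolding In_def t_def
          by (simp add: power2_norm_eq_inner[symmetric] norm_mult norm_divide power_divide)
      qed
    qed
    finally have "(vec_norm m (mat_vec n X v))^2 \<le> (vec_norm n v)^2" by (simp add: vec_norm_sq)
    then show ?thesis by (rule power2_le_imp_le) (rule vec_norm_nonneg)
  qed
  have X1: "op_norm m n X \<le> 1"
    by (rule op_norm_le_of_bound) (use contr in auto)
  define w :: "nat \<Rightarrow> 'a" where "w j = of_real (sqrt (b j))" for j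
  have wn: "vec_norm n w = 1"
    unfolding vec_norm_def w_def using bnn bsum by simp
  let ?AX = "schur_prod (\<lambda>i j. of_real (Ar i j)) X"
  have comp: "mat_vec n ?AX w i = of_real (c / sqrt (a i) * (\<Sum>j<n. Ar i j * Z i j))" if i: "i < m" for i
    unfolding mat_vec_def schur_prod_def X_def w_def of_real_sum sum_distrib_left
  proof (intro sum.cong refl)
    fix j assume j: "j \<in> {..<n}"
    show "of_real (Ar i j) * of_real (c * Z i j / (sqrt (a i) * sqrt (b j))) * of_real (sqrt (b j)) =
        (of_real (c / sqrt (a i) * (Ar i j * Z i j)) :: 'a)"
    proof (cases "b j = 0")
      case True then show ?thesis using bz[OF i] j by simp
    next
      case False
      then have "0 < b j" using bnn j by force
      then have eq: "Ar i j * (c * Z i j / (sqrt (a i) * sqrt (b j))) * sqrt (b j) = c / sqrt (a i) * (Ar i j * Z i j)"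
        by (simp add: field_simps)
      show ?thesis by (simp only: of_real_mult[symmetric] eq)
    qed
  qed
  have "(vec_norm m (mat_vec n ?AX w))^2 = (\<Sum>i<m. c^2 * ((\<Sum>j<n. Ar i j * Z i j)^2 / a i))"
    unfolding vec_norm_sq
  proof (intro sum.cong refl)
    fix i assume i: "i \<in> {..<m}"
    then have ai: "0 \<le> a i" using apos by simp
    have "(norm (mat_vec n ?AX w i))^2 = (c / sqrt (a i) * (\<Sum>j<n. Ar i j * Z i j))^2"
      using i by (simp only: comp norm_of_real power2_abs lessThan_iff)
    also have "\<dots> = c^2 * ((\<Sum>j<n. Ar i j * Z i j)^2 / a i)"
      using ai by (simp add: power_mult_distrib power_divide)
    finally show "(norm (mat_vec n ?AX w i))^2 = c^2 * ((\<Sum>j<n. Ar i j * Z i j)^2 / a i)" .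
  qed
  also have "\<dots> = c^2 * 1" by (simp only: sum_distrib_left[symmetric] val)
  also have "\<dots> = c^2" by simp
  finally have "vec_norm m (mat_vec n ?AX w) = c"
    using c vec_norm_nonneg[of m "mat_vec n ?AX w"] by (simp add: power2_eq_iff_nonneg)
  then have "c \<le> op_norm m n ?AX" using op_norm_upper[of n w m ?AX] wn by simp
  with X1 show ?thesis by blast
qed



type_synonym qq = "rat \<times> rat"

definition qv :: "real \<Rightarrow> qq \<Rightarrow> real" where
  "qv s z = real_of_rat (fst z) + real_of_rat (snd z) * s"

fun qadd :: "qq \<Rightarrow> qq \<Rightarrow> qq" where
  "qadd (a,b) (c,d) = (a + c, b + d)"
fun qsub :: "qq \<Rightarrow> qq \<Rightarrow> qq" where
  "qsub (a,b) (c,d) = (a - c, b - d)"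
fun qmul :: "rat \<Rightarrow> qq \<Rightarrow> qq \<Rightarrow> qq" where
  "qmul D (a,b) (c,d) = (a * c + D * b * d, a * d + b * c)"

fun qdot3 :: "rat \<Rightarrow> qq list \<Rightarrow> qq list \<Rightarrow> qq list \<Rightarrow> qq" where
  "qdot3 D (x#xs) (y#ys) (z#zs) = qadd (qmul D x (qmul D y z)) (qdot3 D xs ys zs)"
| "qdot3 D _ _ _ = (0,0)"

fun qdotr :: "rat list \<Rightarrow> qq list \<Rightarrow> qq" where
  "qdotr (a#as) ((x,y)#zs) = qadd (a*x, a*y) (qdotr as zs)"
| "qdotr _ _ = (0,0)"

fun qsuml :: "qq list \<Rightarrow> qq" where
  "qsuml [] = (0,0)"
| "qsuml (x#xs) = qadd x (qsuml xs)"

definition qnn :: "rat \<Rightarrow> qq \<Rightarrow> bool" where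
  "qnn D z \<longleftrightarrow> (0 \<le> fst z \<and> 0 \<le> snd z) \<or>
     (fst z < 0 \<and> 0 \<le> snd z \<and> fst z * fst z \<le> snd z * snd z * D) \<or>
     (0 \<le> fst z \<and> snd z < 0 \<and> snd z * snd z * D \<le> fst z * fst z)"

lemma qv_add[simp]: "qv s (qadd a b) = qv s a + qv s b"
  by (cases a; cases b) (simp add: qv_def of_rat_add algebra_simps)
lemma qv_sub[simp]: "qv s (qsub a b) = qv s a - qv s b"
  by (cases a; cases b) (simp add: qv_def of_rat_diff algebra_simps)
lemma qv_mul[simp]: "s * s = real_of_rat D \<Longrightarrow> qv s (qmul D a b) = qv s a * qv s b"
proof (cases a; cases b)
  fix x y u v assume ss: "s * s = real_of_rat D" and [simp]: "a = (x,y)" "b = (u,v)"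
  have "qv s (qmul D a b) = of_rat x * of_rat u + of_rat D * of_rat y * of_rat v + (of_rat x * of_rat v + of_rat y * of_rat u) * s"
    by (simp add: qv_def of_rat_add of_rat_mult)
  also have "\<dots> = qv s a * qv s b" by (simp add: qv_def algebra_simps ss[symmetric])
  finally show ?thesis .
qed
lemma qv_rat[simp]: "qv s (x, 0) = real_of_rat x" by (simp add: qv_def)
lemma qv_zero[simp]: "qv s (0, 0) = 0" by (simp add: qv_def)

lemma qnn_sound:
  assumes D: "0 \<le> D" and s: "s = sqrt (real_of_rat D)" and q: "qnn D z"
  shows "0 \<le> qv s z"
proof -
  obtain x y where z: "z = (x,y)" by (cases z)
  let ?x = "real_of_rat x" and ?y = "real_of_rat y" and ?D = "real_of_rat D"
  have Dr: "0 \<le> ?D" using D by simp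
  have s0: "0 \<le> s" using s D by simp
  have ys: "(?y * s)^2 = ?y * ?y * ?D" using s Dr by (simp add: power_mult_distrib power2_eq_square)
  have "0 \<le> ?x \<and> 0 \<le> ?y \<or> ?x < 0 \<and> 0 \<le> ?y \<and> ?x * ?x \<le> ?y * ?y * ?D \<or> 0 \<le> ?x \<and> ?y < 0 \<and> ?y * ?y * ?D \<le> ?x * ?x"
  proof -
    have e1: "(?x * ?x \<le> ?y * ?y * ?D) = (x*x \<le> y*y*D)" by (metis of_rat_less_eq of_rat_mult)
    have e2: "(?y * ?y * ?D \<le> ?x * ?x) = (y*y*D \<le> x*x)" by (metis of_rat_less_eq of_rat_mult)
    show ?thesis using q z e1 e2 unfolding qnn_def by auto
  qed
  then have "0 \<le> ?x + ?y * s"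
  proof (elim disjE conjE)
    assume "0 \<le> ?x" "0 \<le> ?y" then show ?thesis using s0 by simp
  next
    assume a: "?x < 0" "0 \<le> ?y" "?x * ?x \<le> ?y * ?y * ?D"
    then have "?x^2 \<le> (?y * s)^2" unfolding ys by (simp add: power2_eq_square)
    moreover have "0 \<le> ?y * s" using a s0 by simp
    ultimately have "\<bar>?x\<bar> \<le> ?y * s" using abs_le_square_iff by (metis abs_of_nonneg)
    then show ?thesis by linarith
  next
    assume a: "0 \<le> ?x" "?y < 0" "?y * ?y * ?D \<le> ?x * ?x"
    then have "(?y * s)^2 \<le> ?x^2" unfolding ys by (simp add: power2_eq_square)
    then have "\<bar>?y * s\<bar> \<le> ?x" using a(1) abs_le_square_iff by (metis abs_of_nonneg)
    then show ?thesis by linarith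
  qed
  then show ?thesis by (simp add: z qv_def)
qed

lemma qdot3_sound:
  assumes "s * s = real_of_rat D"
  shows "length ys = length xs \<Longrightarrow> length zs = length xs \<Longrightarrow>
    qv s (qdot3 D xs ys zs) = (\<Sum>k<length xs. qv s (xs!k) * qv s (ys!k) * qv s (zs!k))"
proof (induction xs arbitrary: ys zs)
  case Nil then show ?case by simp
next
  case (Cons x xs)
  then obtain y ys' z zs' where "ys = y # ys'" "zs = z # zs'" by (cases ys; cases zs) auto
  with Cons show ?case using assms by (simp del: sum.lessThan_Suc add: sum.lessThan_Suc_shift mult.assoc)
qed

lemma qv_scal: "qv s (a * x, a * y) = real_of_rat a * qv s (x, y)"
  by (simp add: qv_def of_rat_mult algebra_simps)

lemma qdotr_sound:
  "length zs = length as \<Longrightarrow> qv s (qdotr as zs) = (\<Sum>k<length as. real_of_rat (as!k) * qv s (zs!k))"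
proof (induction as arbitrary: zs)
  case Nil then show ?case by simp
next
  case (Cons a as)
  then obtain x y zs' where "zs = (x,y) # zs'" by (cases zs) auto
  with Cons show ?case by (simp del: sum.lessThan_Suc add: sum.lessThan_Suc_shift qv_scal)
qed

lemma qsuml_sound: "qv s (qsuml xs) = (\<Sum>k<length xs. qv s (xs!k))"
  by (induction xs) (simp_all del: sum.lessThan_Suc add: sum.lessThan_Suc_shift)

definition shape_ok :: "rat list list \<Rightarrow> bool" where
  "shape_ok Ar \<longleftrightarrow> Ar \<noteq> [] \<and> list_all (\<lambda>row. length row = length (hd Ar)) Ar"

definition upper_ok :: "rat \<Rightarrow> rat list list \<Rightarrow> qq list \<Rightarrow> qq list list \<Rightarrow> qq list list \<Rightarrow> qq \<Rightarrow> qq \<Rightarrow> qq \<Rightarrow> bool" where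
  "upper_ok D Ar d P Qc al be c2 \<longleftrightarrow>
    length P = length Ar \<and> length Qc = length (hd Ar) \<and>
    list_all (\<lambda>row. length row = length d) P \<and> list_all (\<lambda>row. length row = length d) Qc \<and>
    list_all (\<lambda>i. list_all (\<lambda>j. qdot3 D d (P!i) (Qc!j) = (Ar!i!j, 0)) [0..<length Qc]) [0..<length P] \<and>
    list_all (qnn D) d \<and>
    list_all (\<lambda>pi. qnn D (qsub al (qdot3 D d pi pi))) P \<and>
    list_all (\<lambda>qj. qnn D (qsub be (qdot3 D d qj qj))) Qc \<and>
    qnn D al \<and> qnn D (qsub c2 (qmul D al be))"

definition lower_ok :: "rat \<Rightarrow> rat list list \<Rightarrow> qq \<Rightarrow> qq list \<Rightarrow> qq list \<Rightarrow> qq list \<Rightarrow> qq list \<Rightarrow> qq list list \<Rightarrow> qq list \<Rightarrow> qq list list \<Rightarrow> bool" where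
  "lower_ok D Ar c2 a ainv b binv Z dL W \<longleftrightarrow>
    length a = length Ar \<and> length ainv = length Ar \<and> length Z = length Ar \<and>
    length b = length (hd Ar) \<and> length binv = length b \<and> length W = length dL \<and>
    list_all (\<lambda>row. length row = length b) Z \<and> list_all (\<lambda>row. length row = length b) W \<and>
    list_all (qnn D) a \<and> list_all (\<lambda>i. qmul D (a!i) (ainv!i) = (1,0) \<or> (a!i = (0,0) \<and> ainv!i = (0,0))) [0..<length a] \<and>
    list_all (qnn D) b \<and>
    list_all (\<lambda>j. qmul D (b!j) (binv!j) = (1,0) \<or> (b!j = (0,0) \<and> list_all (\<lambda>zr. zr!j = (0,0)) Z)) [0..<length b] \<and>
    list_all (qnn D) dL \<and>
    list_all (\<lambda>j. list_all (\<lambda>l. (if j = l then b!j else (0,0)) =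
       qadd (qmul D c2 (qdot3 D ainv (map (\<lambda>zr. zr!j) Z) (map (\<lambda>zr. zr!l) Z)))
            (qdot3 D dL (map (\<lambda>w. w!j) W) (map (\<lambda>w. w!l) W))) [0..<length b]) [0..<length b] \<and>
    qdot3 D ainv (map (\<lambda>i. qdotr (Ar!i) (Z!i)) [0..<length Ar]) (map (\<lambda>i. qdotr (Ar!i) (Z!i)) [0..<length Ar]) = (1,0) \<and>
    qsuml b = (1,0)"



lemma list_all_upt: "list_all P [0..<n] \<longleftrightarrow> (\<forall>i<n. P i)"
  by (auto simp: list_all_iff)

lemma list_all_nth': "list_all P xs \<Longrightarrow> i < length xs \<Longrightarrow> P (xs ! i)"
  by (simp add: list_all_length)

lemma cert_sound_gen:
  fixes rows :: "real list list" and Ar :: "rat list list"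
  assumes rows: "rows = map (map real_of_rat) Ar"
    and sh: "shape_ok Ar"
    and up: "upper_ok D Ar dU P Qc al be c2"
    and lo: "lower_ok D Ar c2 a ainv b binv Z dL W"
    and D: "0 \<le> D" and c: "0 \<le> c" and cc: "c^2 = qv (sqrt (real_of_rat D)) c2"
  shows "schur_norm_rows TYPE('a::{real_normed_field,real_inner}) rows = c"
proof -
  define s where "s = sqrt (real_of_rat D)"
  have ss: "s * s = real_of_rat D" using D by (simp add: s_def)
  have cc': "c^2 = qv s c2" using cc by (simp add: s_def)
  have nn: "qnn D z \<Longrightarrow> 0 \<le> qv s z" for z using qnn_sound[OF D s_def] .
  define m where "m = length Ar"
  define n where "n = length (hd Ar)"
  have Ane: "Ar \<noteq> []" and Alen: "\<And>i. i < m \<Longrightarrow> length (Ar!i) = n"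
    using sh unfolding shape_ok_def m_def n_def by (auto simp: list_all_length)
  have lr: "length rows = m" "length (hd rows) = n"
    using Ane by (auto simp: rows m_def n_def hd_map)
  have ent: "rows!i!j = real_of_rat (Ar!i!j)" if "i < m" "j < n" for i j
    using that Alen by (simp add: rows m_def)
  let ?A = "\<lambda>i j. rows!i!j"
  have mat: "(mat_of_rows rows :: nat\<Rightarrow>nat\<Rightarrow>'a) = (\<lambda>i j. of_real (?A i j))"
    by (simp add: mat_of_rows_def)
  from up have
      uP: "length P = m" and uQ: "length Qc = n"
      and uPl: "\<And>i. i < m \<Longrightarrow> length (P!i) = length dU"
      and uQl: "\<And>j. j < n \<Longrightarrow> length (Qc!j) = length dU"
      and ufac: "\<And>i j. i < m \<Longrightarrow> j < n \<Longrightarrow> qdot3 D dU (P!i) (Qc!j) = (Ar!i!j, 0)"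
      and ud: "\<And>k. k < length dU \<Longrightarrow> qnn D (dU!k)"
      and urow: "\<And>i. i < m \<Longrightarrow> qnn D (qsub al (qdot3 D dU (P!i) (P!i)))"
      and ucol: "\<And>j. j < n \<Longrightarrow> qnn D (qsub be (qdot3 D dU (Qc!j) (Qc!j)))"
      and ual: "qnn D al" and uab: "qnn D (qsub c2 (qmul D al be))"
    unfolding upper_ok_def m_def n_def list_all_upt by (auto simp: list_all_length)
  have upper: "op_norm m n (schur_prod (\<lambda>i j. of_real (?A i j)) X) \<le> c"
    if X: "op_norm m n (X::nat\<Rightarrow>nat\<Rightarrow>'a) \<le> 1" for X
  proof (rule upper_core[where d="\<lambda>k. qv s (dU!k)" and p="\<lambda>i k. qv s (P!i!k)"
        and q="\<lambda>k j. qv s (Qc!j!k)" and r="length dU" and \<alpha>="qv s al" and \<beta>="qv s be"])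
    fix i j assume ij: "i < m" "j < n"
    show "rows!i!j = (\<Sum>k<length dU. qv s (dU!k) * qv s (P!i!k) * qv s (Qc!j!k))"
      using qdot3_sound[OF ss, of "P!i" dU "Qc!j"] ufac[OF ij] uPl[OF ij(1)] uQl[OF ij(2)] ent[OF ij]
      by simp
  next
    fix k assume "k < length dU" then show "0 \<le> qv s (dU!k)" using ud nn by blast
  next
    fix i assume i: "i < m"
    show "(\<Sum>k<length dU. qv s (dU!k) * (qv s (P!i!k))^2) \<le> qv s al"
      using nn[OF urow[OF i]] qdot3_sound[OF ss, of "P!i" dU "P!i"] uPl[OF i]
      by (simp add: power2_eq_square mult.assoc)
  next
    fix j assume j: "j < n"
    show "(\<Sum>k<length dU. qv s (dU!k) * (qv s (Qc!j!k))^2) \<le> qv s be"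
      using nn[OF ucol[OF j]] qdot3_sound[OF ss, of "Qc!j" dU "Qc!j"] uQl[OF j]
      by (simp add: power2_eq_square mult.assoc)
  next
    show "0 \<le> qv s al" using nn[OF ual] .
    show "qv s al * qv s be \<le> c^2" using nn[OF uab] cc ss by (simp add: s_def)
    show "0 \<le> c" by (rule c)
    show "op_norm m n X \<le> 1" by (rule X)
  qed
  from lo have
      la: "length a = m" and lai: "length ainv = m" and lZ: "length Z = m"
      and lb: "length b = n" and lbi: "length binv = n" and lW: "length W = length dL"
      and lZr: "\<And>i. i < m \<Longrightarrow> length (Z!i) = n" and lWr: "\<And>k. k < length dL \<Longrightarrow> length (W!k) = n"
      and lan: "\<And>i. i < m \<Longrightarrow> qnn D (a!i)"
      and lainv: "\<And>i. i < m \<Longrightarrow> qmul D (a!i) (ainv!i) = (1,0) \<or> (a!i = (0,0) \<and> ainv!i = (0,0))"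
      and lbn: "\<And>j. j < n \<Longrightarrow> qnn D (b!j)"
      and lbz: "\<And>j. j < n \<Longrightarrow> qmul D (b!j) (binv!j) = (1,0) \<or> (b!j = (0,0) \<and> (\<forall>i<m. Z!i!j = (0,0)))"
      and ldn: "\<And>k. k < length dL \<Longrightarrow> qnn D (dL!k)"
      and lpsd: "\<And>j l. j < n \<Longrightarrow> l < n \<Longrightarrow> (if j = l then b!j else (0,0)) =
       qadd (qmul D c2 (qdot3 D ainv (map (\<lambda>zr. zr!j) Z) (map (\<lambda>zr. zr!l) Z)))
            (qdot3 D dL (map (\<lambda>w. w!j) W) (map (\<lambda>w. w!l) W))"
      and lval: "qdot3 D ainv (map (\<lambda>i. qdotr (Ar!i) (Z!i)) [0..<m]) (map (\<lambda>i. qdotr (Ar!i) (Z!i)) [0..<m]) = (1,0)"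
      and lbs: "qsuml b = (1,0)"
    unfolding lower_ok_def m_def n_def list_all_upt by (auto simp: list_all_length)
  have ainv: "qv s (ainv!i) = 1 / qv s (a!i)" and apos: "0 \<le> qv s (a!i)" if i: "i < m" for i
  proof -
    show "0 \<le> qv s (a!i)" using nn[OF lan[OF i]] .
    show "qv s (ainv!i) = 1 / qv s (a!i)"
    proof (cases "qmul D (a!i) (ainv!i) = (1,0)")
      case True
      then have "qv s (a!i) * qv s (ainv!i) = 1" using qv_mul[OF ss, of "a!i" "ainv!i"] by simp
      then show ?thesis by (metis nonzero_eq_divide_eq mult.commute mult_zero_left zero_neq_one)
    next
      case False then show ?thesis using lainv[OF i] by auto
    qed
  qed
  obtain X0 :: "nat\<Rightarrow>nat\<Rightarrow>'a" where X0: "op_norm m n X0 \<le> 1"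
      "c \<le> op_norm m n (schur_prod (\<lambda>i j. of_real (?A i j)) X0)"
  proof -
    have "\<exists>X::nat\<Rightarrow>nat\<Rightarrow>'a. op_norm m n X \<le> 1 \<and> c \<le> op_norm m n (schur_prod (\<lambda>i j. of_real (?A i j)) X)"
    proof (rule lower_core[where a="\<lambda>i. qv s (a!i)" and b="\<lambda>j. qv s (b!j)" and Z="\<lambda>i j. qv s (Z!i!j)"
          and d="\<lambda>k. qv s (dL!k)" and W="\<lambda>k j. qv s (W!k!j)" and r="length dL"])
      fix i assume "i < m" then show "0 \<le> qv s (a!i)" by (rule apos)
    next
      fix j assume "j < n" then show "0 \<le> qv s (b!j)" using lbn nn by blast
    next
      fix i j assume ij: "i < m" "j < n" "qv s (b!j) = 0"
      show "qv s (Z!i!j) = 0"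
      proof (cases "qmul D (b!j) (binv!j) = (1,0)")
        case True
        then have "qv s (b!j) * qv s (binv!j) = 1" using qv_mul[OF ss, of "b!j" "binv!j"] by simp
        then show ?thesis using ij(3) by simp
      next
        case False then show ?thesis using lbz[OF ij(2)] ij(1) by auto
      qed
    next
      fix k assume "k < length dL" then show "0 \<le> qv s (dL!k)" using ldn nn by blast
    next
      fix j l assume jl: "j < n" "l < n"
      have e: "qv s (if j = l then b!j else (0,0)) = (if j = l then qv s (b!j) else 0)" by simp
      have s1: "qv s (qdot3 D ainv (map (\<lambda>zr. zr!j) Z) (map (\<lambda>zr. zr!l) Z)) =
          (\<Sum>i<m. qv s (Z!i!j) * qv s (Z!i!l) / qv s (a!i))"
        using qdot3_sound[OF ss, of "map (\<lambda>zr. zr!j) Z" ainv "map (\<lambda>zr. zr!l) Z"] lai lZ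
        by (simp add: ainv)
      have s2: "qv s (qdot3 D dL (map (\<lambda>w. w!j) W) (map (\<lambda>w. w!l) W)) =
          (\<Sum>k<length dL. qv s (dL!k) * qv s (W!k!j) * qv s (W!k!l))"
        using qdot3_sound[OF ss, of "map (\<lambda>w. w!j) W" dL "map (\<lambda>w. w!l) W"] lW
        by (simp add: mult.assoc)
      have "qv s (if j = l then b!j else (0,0)) = qv s c2 * qv s (qdot3 D ainv (map (\<lambda>zr. zr!j) Z) (map (\<lambda>zr. zr!l) Z))
          + qv s (qdot3 D dL (map (\<lambda>w. w!j) W) (map (\<lambda>w. w!l) W))"
        by (subst lpsd[OF jl]) (simp add: ss)
      then show "(if j = l then qv s (b!j) else 0) = c^2 * (\<Sum>i<m. qv s (Z!i!j) * qv s (Z!i!l) / qv s (a!i))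
          + (\<Sum>k<length dL. qv s (dL!k) * qv s (W!k!j) * qv s (W!k!l))"
        by (simp only: e s1 s2 cc')
    next
      have rs: "qv s (qdotr (Ar!i) (Z!i)) = (\<Sum>j<n. ?A i j * qv s (Z!i!j))" if i: "i < m" for i
        using qdotr_sound[of "Z!i" "Ar!i" s] lZr[OF i] Alen[OF i] ent[OF i] by simp
      have "qv s (qdot3 D ainv (map (\<lambda>i. qdotr (Ar!i) (Z!i)) [0..<m]) (map (\<lambda>i. qdotr (Ar!i) (Z!i)) [0..<m])) = 1"
        using lval by simp
      then show "(\<Sum>i<m. (\<Sum>j<n. ?A i j * qv s (Z!i!j))^2 / qv s (a!i)) = 1"
        using qdot3_sound[OF ss, of "map (\<lambda>i. qdotr (Ar!i) (Z!i)) [0..<m]" ainv "map (\<lambda>i. qdotr (Ar!i) (Z!i)) [0..<m]"] lai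
        by (simp add: ainv rs power2_eq_square)
    next
      show "(\<Sum>j<n. qv s (b!j)) = 1" using qsuml_sound[of s b] lbs lb by simp
    next
      show "0 \<le> c" by (rule c)
    qed
    then show ?thesis using that by blast
  qed
  have "schur_norm_rows TYPE('a) rows = schur_norm m n (\<lambda>i j. (of_real (?A i j) :: 'a))"
    unfolding schur_norm_rows_def lr mat ..
  also have "\<dots> = c"
  proof (rule antisym)
    show "schur_norm m n (\<lambda>i j. (of_real (?A i j) :: 'a)) \<le> c" by (rule schur_norm_le) (rule upper)
    show "c \<le> schur_norm m n (\<lambda>i j. (of_real (?A i j) :: 'a))" by (rule schur_norm_ge[OF upper X0])
  qed
  finally show ?thesis .
qed

lemma cert_sound:
  fixes rows :: "real list list" and Ar :: "rat list list"
  assumes "rows = map (map real_of_rat) Ar"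
    and "shape_ok Ar"
    and "upper_ok D Ar dU P Qc al be c2"
    and "lower_ok D Ar c2 a ainv b binv Z dL W"
    and "0 \<le> D" and "0 \<le> c" and "c^2 = qv (sqrt (real_of_rat D)) c2"
  shows "schur_norm_is rows c"
  unfolding schur_norm_is_def
  using cert_sound_gen[OF assms, where 'a=real] cert_sound_gen[OF assms, where 'a=complex] by simp


lemma m1_up: "upper_ok 2 [[1]]
  [(1, 0)]
  [[(1, 0)]]
  [[(1, 0)]]
  (1, 0) (1, 0) (1, 0)"
  by (simp add: upper_ok_def qnn_def)

lemma m1_lo: "lower_ok 2 [[1]] (1, 0)
  [(1, 0)] [(1, 0)]
  [(1, 0)] [(1, 0)]
  [[(1, 0)]]
  []
  []"
  by (simp add: lower_ok_def qnn_def)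

lemma m2_up: "upper_ok 3 [[1, 1], [0, 1]]
  [(1, 0), (3/4, 0)]
  [[(1, 0), (0, 0)], [(1/2, 0), (1, 0)]]
  [[(1, 0), ((-2/3), 0)], [(1, 0), (2/3, 0)]]
  (1, 0) (4/3, 0) (4/3, 0)"
  by (simp add: upper_ok_def qnn_def)

lemma m2_lo: "lower_ok 3 [[1, 1], [0, 1]] (4/3, 0)
  [(2/3, 0), (1/3, 0)] [(3/2, 0), (3, 0)]
  [(1/3, 0), (2/3, 0)] [(3, 0), (3/2, 0)]
  [[(1/3, 0), (1/3, 0)], [((-1/6), 0), (1/3, 0)]]
  []
  []"
  by (simp add: lower_ok_def qnn_def)

lemma m2b_up: "upper_ok 3 [[1, 1, 0], [0, 1, 1]]
  [(1, 0), (3/4, 0)]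
  [[(1, 0), (0, 0)], [(1/2, 0), (1, 0)]]
  [[(1, 0), ((-2/3), 0)], [(1, 0), (2/3, 0)], [(0, 0), (4/3, 0)]]
  (1, 0) (4/3, 0) (4/3, 0)"
  by (simp add: upper_ok_def qnn_def)

lemma m2b_lo: "lower_ok 3 [[1, 1, 0], [0, 1, 1]] (4/3, 0)
  [(2/3, 0), (1/3, 0)] [(3/2, 0), (3, 0)]
  [(1/3, 0), (2/3, 0), (0, 0)] [(3, 0), (3/2, 0), (0, 0)]
  [[(1/3, 0), (1/3, 0), (0, 0)], [((-1/6), 0), (1/3, 0), (0, 0)]]
  []
  []"
  by (simp add: lower_ok_def qnn_def)

lemma m3_up: "upper_ok 2 [[1, 1, 0], [0, 1, 1], [0, 0, 1]]
  [(1, 0), ((-2), 2), (12, (-8))]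
  [[(1, 0), (0, 0), (0, 0)], [((-1), 1), (1, 0), (0, 0)], [((-3), 2), (2, (-1)), (1, 0)]]
  [[(1, 0), ((-1/2), 0), (1/4, 1/4)], [(1, 0), (0, 1/2), ((-1/4), 0)], [(0, 0), (1/2, 1/2), (1/4, 1/4)]]
  (1, 0) (3/4, 1/2) (3/4, 1/2)"
  by (simp add: upper_ok_def qnn_def)

lemma m3_lo: "lower_ok 2 [[1, 1, 0], [0, 1, 1], [0, 0, 1]] (3/4, 1/2)
  [(0, 1/4), (1/2, 0), (1/2, (-1/4))] [(0, 2), (2, 0), (4, 2)]
  [(1/2, (-1/4)), (1/2, 0), (0, 1/4)] [(4, 2), (2, 0), (0, 2)]
  [[(1/2, (-1/4)), ((-1/2), 1/2), (1, (-3/4))], [((-3/2), 1), (1, (-1/2)), ((-1/2), 1/2)], [((-1), 3/4), ((-3/2), 1), (1/2, (-1/4))]]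
  []
  []"
  by (simp add: lower_ok_def qnn_def)

lemma m3b_up: "upper_ok 2 [[1, 1, 0, 0], [0, 1, 1, 0], [0, 0, 1, 1]]
  [(1, 0), ((-2), 2), (12, (-8))]
  [[(1, 0), (0, 0), (0, 0)], [((-1), 1), (1, 0), (0, 0)], [((-3), 2), (2, (-1)), (1, 0)]]
  [[(1, 0), ((-1/2), 0), (1/4, 1/4)], [(1, 0), (0, 1/2), ((-1/4), 0)], [(0, 0), (1/2, 1/2), (1/4, 1/4)], [(0, 0), (0, 0), (3/4, 1/2)]]
  (1, 0) (3/4, 1/2) (3/4, 1/2)"
  by (simp add: upper_ok_def qnn_def)

lemma m3b_lo: "lower_ok 2 [[1, 1, 0, 0], [0, 1, 1, 0], [0, 0, 1, 1]] (3/4, 1/2)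
  [(0, 1/4), (1/2, 0), (1/2, (-1/4))] [(0, 2), (2, 0), (4, 2)]
  [(1/2, (-1/4)), (1/2, 0), (0, 1/4), (0, 0)] [(4, 2), (2, 0), (0, 2), (0, 0)]
  [[(1/2, (-1/4)), ((-1/2), 1/2), (1, (-3/4)), (0, 0)], [((-3/2), 1), (1, (-1/2)), ((-1/2), 1/2), (0, 0)], [((-1), 3/4), ((-3/2), 1), (1/2, (-1/4)), (0, 0)]]
  []
  []"
  by (simp add: lower_ok_def qnn_def)

lemma m3c_up: "upper_ok 2 [[1, 1, 0, 0], [1, 0, 1, 0], [0, 1, 0, 1], [0, 0, 1, 1]]
  [(1, 0), ((-2), 2), (12, (-8))]
  [[(1, 0), (0, 0), (0, 0)], [((-1), 1), (1, 0), (0, 0)], [((-1), 1), (1, (-1)), (1, 0)], [((-3), 2), (2, (-1)), (1, 0)]]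
  [[(1, 0), (0, 1/2), ((-1/4), 0)], [(1, 0), ((-1/2), 0), (1/4, 1/4)], [(0, 0), (1/2, 1/2), (1/4, 1/4)], [(0, 0), (0, 0), (3/4, 1/2)]]
  (1, 0) (3/4, 1/2) (3/4, 1/2)"
  by (simp add: upper_ok_def qnn_def)

lemma m3c_lo: "lower_ok 2 [[1, 1, 0, 0], [1, 0, 1, 0], [0, 1, 0, 1], [0, 0, 1, 1]] (3/4, 1/2)
  [(1/2, (-1/4)), (1/2, 0), (0, 0), (0, 1/4)] [(4, 2), (2, 0), (0, 0), (0, 2)]
  [(0, 1/4), (0, 0), (1/2, 0), (1/2, (-1/4))] [(0, 2), (0, 0), (2, 0), (4, 2)]
  [[(1/2, (-1/4)), (0, 0), ((-3/2), 1), ((-1), 3/4)], [((-1/2), 1/2), (0, 0), (1, (-1/2)), ((-3/2), 1)], [(0, 0), (0, 0), (0, 0), (0, 0)], [(1, (-3/4)), (0, 0), ((-1/2), 1/2), (1/2, (-1/4))]]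
  []
  []"
  by (simp add: lower_ok_def qnn_def)

lemma m4_up: "upper_ok 19 [[1, 0, 0], [1, 1, 1], [0, 0, 1]]
  [(1, 0), ((-34), 8), (83/18, (-8/9))]
  [[(1, 0), (0, 0), (0, 0)], [((-4), 1), (1, 0), (0, 0)], [((-5/3), 1/3), (1/2, 0), (1, 0)]]
  [[(1, 0), (3/10, 1/10), ((-37/225), 1/225)], [(0, 0), (17/30, 2/15), ((-83/225), (-16/225))], [(0, 0), (17/30, 2/15), (83/225, 16/225)]]
  (1, 0) (169/225, 38/225) (169/225, 38/225)"
  by (simp add: upper_ok_def qnn_def)

lemma m4_lo: "lower_ok 19 [[1, 0, 0], [1, 1, 1], [0, 0, 1]] (169/225, 38/225)
  [(1/3, (-1/30)), (1/3, 1/15), (1/3, (-1/30))] [(100/27, 10/27), (25/2, (-5/2)), (100/27, 10/27)]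
  [(4/15, 1/30), (7/15, (-1/15)), (4/15, 1/30)] [(16/3, (-2/3)), (7/2, 1/2), (16/3, (-2/3))]
  [[(1/3, (-1/30)), ((-23/15), 1/3), ((-23/30), 1/6)], [((-1/15), 1/15), (7/15, (-1/15)), ((-1/15), 1/15)], [((-23/30), 1/6), ((-23/15), 1/3), (1/3, (-1/30))]]
  []
  []"
  by (simp add: lower_ok_def qnn_def)

lemma m4b_up: "upper_ok 19 [[1, 0, 0, 1, 0], [1, 1, 1, 0, 0], [0, 0, 1, 0, 1]]
  [(1, 0), ((-34), 8), (83/18, (-8/9))]
  [[(1, 0), (0, 0), (0, 0)], [((-4), 1), (1, 0), (0, 0)], [((-5/3), 1/3), (1/2, 0), (1, 0)]]
  [[(1, 0), (3/10, 1/10), ((-37/225), 1/225)], [(0, 0), (17/30, 2/15), ((-83/225), (-16/225))], [(0, 0), (17/30, 2/15), (83/225, 16/225)], [(1, 0), ((-4/15), (-1/30)), (46/225, 17/225)], [(0, 0), (0, 0), (166/225, 32/225)]]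
  (1, 0) (169/225, 38/225) (169/225, 38/225)"
  by (simp add: upper_ok_def qnn_def)

lemma m4b_lo: "lower_ok 19 [[1, 0, 0, 1, 0], [1, 1, 1, 0, 0], [0, 0, 1, 0, 1]] (169/225, 38/225)
  [(1/3, (-1/30)), (1/3, 1/15), (1/3, (-1/30))] [(100/27, 10/27), (25/2, (-5/2)), (100/27, 10/27)]
  [(4/15, 1/30), (7/15, (-1/15)), (4/15, 1/30), (0, 0), (0, 0)] [(16/3, (-2/3)), (7/2, 1/2), (16/3, (-2/3)), (0, 0), (0, 0)]
  [[(1/3, (-1/30)), ((-23/15), 1/3), ((-23/30), 1/6), (0, 0), (0, 0)], [((-1/15), 1/15), (7/15, (-1/15)), ((-1/15), 1/15), (0, 0), (0, 0)], [((-23/30), 1/6), ((-23/15), 1/3), (1/3, (-1/30)), (0, 0), (0, 0)]]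
  []
  []"
  by (simp add: lower_ok_def qnn_def)

lemma m5_up: "upper_ok 2 [[1, 1, 0, 0], [1, 0, 1, 0], [1, 0, 0, 1]]
  [(1, 0), (3/4, 0), (2/3, 0)]
  [[(1, 0), (0, 0), (0, 0)], [(1/2, 0), (1, 0), (0, 0)], [(1/2, 0), (1/3, 0), (1, 0)]]
  [[(1, 0), (2/3, 0), (1/2, 0)], [(1, 0), ((-2/3), 0), ((-1/2), 0)], [(0, 0), (4/3, 0), ((-1/2), 0)], [(0, 0), (0, 0), (3/2, 0)]]
  (1, 0) (3/2, 0) (3/2, 0)"
  by (simp add: upper_ok_def qnn_def)

lemma m5_lo: "lower_ok 2 [[1, 1, 0, 0], [1, 0, 1, 0], [1, 0, 0, 1]] (3/2, 0)
  [(1/3, 0), (1/3, 0), (1/3, 0)] [(3, 0), (3, 0), (3, 0)]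
  [(5/8, 0), (1/8, 0), (1/8, 0), (1/8, 0)] [(8/5, 0), (8, 0), (8, 0), (8, 0)]
  [[(5/24, 0), (1/8, 0), ((-1/24), 0), ((-1/24), 0)], [(5/24, 0), ((-1/24), 0), (1/8, 0), ((-1/24), 0)], [(5/24, 0), ((-1/24), 0), ((-1/24), 0), (1/8, 0)]]
  [(5/128, 0)]
  [[(1, 0), ((-1), 0), ((-1), 0), ((-1), 0)]]"
  by (simp add: lower_ok_def qnn_def)

lemma m6_up: "upper_ok 5 [[1, 1, 0, 0], [0, 1, 1, 0], [0, 0, 1, 1], [0, 0, 0, 1]]
  [(1, 0), ((-5/2), 3/2), ((-5/8), 5/8), (25/4, (-5/2))]
  [[(1, 0), (0, 0), (0, 0), (0, 0)], [(3/2, (-1/2)), (1, 0), (0, 0), (0, 0)], [(1, (-1/2)), (1/2, 0), (1, 0), (0, 0)], [((-1), 1/2), ((-3/4), 1/4), ((-1/2), 1/2), (1, 0)]]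
  [[(1, 0), (0, (-1/5)), (2/5, 0), ((-2/5), (-2/25))], [(1, 0), (1/2, 1/10), (1/5, (-1/5)), (0, 2/25)], [(0, 0), (1/2, 3/10), (1/5, 1/5), (0, (-2/25))], [(0, 0), (0, 0), (2/5, 2/5), (2/5, 2/25)]]
  (1, 0) (4/5, 8/25) (4/5, 8/25)"
  by (simp add: upper_ok_def qnn_def)

lemma m6_lo: "lower_ok 5 [[1, 1, 0, 0], [0, 1, 1, 0], [0, 0, 1, 1], [0, 0, 0, 1]] (4/5, 8/25)
  [(1/5, 0), (2/5, 0), (1/10, 1/10), (3/10, (-1/10))] [(5, 0), (5/2, 0), ((-5/2), 5/2), (15/2, 5/2)]
  [(3/10, (-1/10)), (1/10, 1/10), (2/5, 0), (1/5, 0)] [(15/2, 5/2), ((-5/2), 5/2), (5/2, 0), (5, 0)]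
  [[(3/10, (-1/10)), ((-1/10), 1/10), (2/5, (-1/5)), ((-1/5), 1/10)], [(2/5, (-1/5)), (1/5, 0), (1/5, 0), (2/5, (-1/5))], [(3/20, (-1/20)), ((-3/10), 1/10), (1/5, 0), ((-1/10), 1/10)], [((-7/10), 3/10), (3/20, (-1/20)), (2/5, (-1/5)), (3/10, (-1/10))]]
  []
  []"
  by (simp add: lower_ok_def qnn_def)

lemma m6b_up: "upper_ok 5 [[1, 1, 0, 0, 0], [0, 1, 1, 0, 0], [0, 0, 1, 1, 0], [0, 0, 0, 1, 1]]
  [(1, 0), ((-5/2), 3/2), ((-5/8), 5/8), (25/4, (-5/2))]
  [[(1, 0), (0, 0), (0, 0), (0, 0)], [(3/2, (-1/2)), (1, 0), (0, 0), (0, 0)], [(1, (-1/2)), (1/2, 0), (1, 0), (0, 0)], [((-1), 1/2), ((-3/4), 1/4), ((-1/2), 1/2), (1, 0)]]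
  [[(1, 0), (0, (-1/5)), (2/5, 0), ((-2/5), (-2/25))], [(1, 0), (1/2, 1/10), (1/5, (-1/5)), (0, 2/25)], [(0, 0), (1/2, 3/10), (1/5, 1/5), (0, (-2/25))], [(0, 0), (0, 0), (2/5, 2/5), (2/5, 2/25)], [(0, 0), (0, 0), (0, 0), (4/5, 8/25)]]
  (1, 0) (4/5, 8/25) (4/5, 8/25)"
  by (simp add: upper_ok_def qnn_def)

lemma m6b_lo: "lower_ok 5 [[1, 1, 0, 0, 0], [0, 1, 1, 0, 0], [0, 0, 1, 1, 0], [0, 0, 0, 1, 1]] (4/5, 8/25)
  [(1/5, 0), (2/5, 0), (1/10, 1/10), (3/10, (-1/10))] [(5, 0), (5/2, 0), ((-5/2), 5/2), (15/2, 5/2)]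
  [(3/10, (-1/10)), (1/10, 1/10), (2/5, 0), (1/5, 0), (0, 0)] [(15/2, 5/2), ((-5/2), 5/2), (5/2, 0), (5, 0), (0, 0)]
  [[(3/10, (-1/10)), ((-1/10), 1/10), (2/5, (-1/5)), ((-1/5), 1/10), (0, 0)], [(2/5, (-1/5)), (1/5, 0), (1/5, 0), (2/5, (-1/5)), (0, 0)], [(3/20, (-1/20)), ((-3/10), 1/10), (1/5, 0), ((-1/10), 1/10), (0, 0)], [((-7/10), 3/10), (3/20, (-1/20)), (2/5, (-1/5)), (3/10, (-1/10)), (0, 0)]]
  []
  []"
  by (simp add: lower_ok_def qnn_def)

lemma m7_up: "upper_ok 6 [[1, 1, 0], [1, 1, 1], [0, 1, 0]]
  [(1, 0), ((-744), 304), (21/8, (-3/4))]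
  [[(1, 0), (0, 0), (0, 0)], [((-19), 8), (1, 0), (0, 0)], [((-2), 1), (1/8, 0), (1, 0)]]
  [[(1, 0), (3/10, 2/15), ((-28/75), (-8/75))], [(1, 0), (3/10, 2/15), (28/75, 8/75)], [(0, 0), (31/40, 19/60), ((-7/75), (-2/75))]]
  (1, 0) (59/75, 8/25) (59/75, 8/25)"
  by (simp add: upper_ok_def qnn_def)

lemma m7_lo: "lower_ok 6 [[1, 1, 0], [1, 1, 1], [0, 1, 0]] (59/75, 8/25)
  [(1/5, 1/30), (4/15, 1/10), (8/15, (-2/15))] [(6, (-1)), (24, (-9)), (3, 3/4)]
  [(1/5, 1/30), (4/15, 1/10), (8/15, (-2/15))] [(6, (-1)), (24, (-9)), (3, 3/4)]
  [[(2/5, (-1/10)), ((-1/5), 2/15), ((-12/5), 14/15)], [((-1/5), 2/15), ((-1/15), 1/10), (8/15, (-2/15))], [((-12/5), 14/15), (8/15, (-2/15)), ((-64/15), 26/15)]]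
  []
  []"
  by (simp add: lower_ok_def qnn_def)

lemma m8_up: "upper_ok 2 [[1, 1, 0], [1, 1, 1], [0, 1, 1]]
  [(1, 0), (56/81, 0), (49/72, 0)]
  [[(1, 0), (0, 0), (0, 0)], [(5/9, 0), (1, 0), (0, 0)], [(2/9, 0), (5/8, 0), (1, 0)]]
  [[(1, 0), (9/14, 0), ((-36/49), 0)], [(1, 0), (9/14, 0), (36/49, 0)], [(0, 0), (81/56, 0), (27/49, 0)]]
  (1, 0) (81/49, 0) (81/49, 0)"
  by (simp add: upper_ok_def qnn_def)

lemma m8_lo: "lower_ok 2 [[1, 1, 0], [1, 1, 1], [0, 1, 1]] (81/49, 0)
  [(2/7, 0), (3/7, 0), (2/7, 0)] [(7/2, 0), (7/3, 0), (7/2, 0)]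
  [(2/7, 0), (3/7, 0), (2/7, 0)] [(7/2, 0), (7/3, 0), (7/2, 0)]
  [[(2/21, 0), (4/21, 0), ((-8/63), 0)], [(4/21, 0), (1/21, 0), (4/21, 0)], [((-8/63), 0), (4/21, 0), (2/21, 0)]]
  []
  []"
  by (simp add: lower_ok_def qnn_def)

lemma m9_up: "upper_ok 2 [[1, 1, 0], [1, 0, 1], [0, 1, 1]]
  [(1, 0), (15/16, 0), (9/10, 0)]
  [[(1, 0), (0, 0), (0, 0)], [(1/4, 0), (1, 0), (0, 0)], [(1/4, 0), (1/5, 0), (1, 0)]]
  [[(1, 0), (4/5, 0), ((-4/9), 0)], [(1, 0), ((-4/15), 0), (8/9, 0)], [(0, 0), (16/15, 0), (8/9, 0)]]
  (1, 0) (16/9, 0) (16/9, 0)"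
  by (simp add: upper_ok_def qnn_def)

lemma m9_lo: "lower_ok 2 [[1, 1, 0], [1, 0, 1], [0, 1, 1]] (16/9, 0)
  [(1/3, 0), (1/3, 0), (1/3, 0)] [(3, 0), (3, 0), (3, 0)]
  [(1/3, 0), (1/3, 0), (1/3, 0)] [(3, 0), (3, 0), (3, 0)]
  [[(1/6, 0), (1/6, 0), ((-1/12), 0)], [(1/6, 0), ((-1/12), 0), (1/6, 0)], [((-1/12), 0), (1/6, 0), (1/6, 0)]]
  []
  []"
  by (simp add: lower_ok_def qnn_def)

lemma csq0: "1^2 = qv (sqrt (real_of_rat 2)) (1, 0)"
  by (simp add: qv_def power_mult_distrib of_rat_divide algebra_simps power2_eq_square)

lemma csq1: "(sqrt (4/3))^2 = qv (sqrt (real_of_rat 3)) (4/3, 0)"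
  by (simp add: qv_def power_mult_distrib of_rat_divide algebra_simps power2_eq_square)

lemma csq2: "((1 + sqrt 2) / 2)^2 = qv (sqrt (real_of_rat 2)) (3/4, 1/2)"
  by (simp add: qv_def power_mult_distrib of_rat_divide algebra_simps power2_eq_square)

lemma csq3: "(1/15 * sqrt (169 + 38 * sqrt 19))^2 = qv (sqrt (real_of_rat 19)) (169/225, 38/225)"
  by (simp add: qv_def power_mult_distrib of_rat_divide algebra_simps power2_eq_square)

lemma csq4: "(sqrt (3/2))^2 = qv (sqrt (real_of_rat 2)) (3/2, 0)"
  by (simp add: qv_def power_mult_distrib of_rat_divide algebra_simps power2_eq_square)

lemma csq5: "(2/5 * sqrt (5 + 2 * sqrt 5))^2 = qv (sqrt (real_of_rat 5)) (4/5, 8/25)"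
  by (simp add: qv_def power_mult_distrib of_rat_divide algebra_simps power2_eq_square)

lemma csq6: "(1/15 * (9 + 4 * sqrt 6))^2 = qv (sqrt (real_of_rat 6)) (59/75, 8/25)"
  by (simp add: qv_def power_mult_distrib of_rat_divide algebra_simps power2_eq_square)

lemma csq7: "(9/7)^2 = qv (sqrt (real_of_rat 2)) (81/49, 0)"
  by (simp add: qv_def power_mult_distrib of_rat_divide algebra_simps power2_eq_square)

lemma csq8: "(4/3)^2 = qv (sqrt (real_of_rat 2)) (16/9, 0)"
  by (simp add: qv_def power_mult_distrib of_rat_divide algebra_simps power2_eq_square)

theorem proposition5p1:
  shows
   "schur_norm_is [[1]] 1 \<and>
    schur_norm_is [[1,1],[0,1]] (sqrt (4/3)) \<and>
    schur_norm_is [[1,1,0],[0,1,1]] (sqrt (4/3)) \<and>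
    schur_norm_is [[1,1,0],[0,1,1],[0,0,1]] ((1 + sqrt 2) / 2) \<and>
    schur_norm_is [[1,1,0,0],[0,1,1,0],[0,0,1,1]] ((1 + sqrt 2) / 2) \<and>
    schur_norm_is [[1,1,0,0],[1,0,1,0],[0,1,0,1],[0,0,1,1]] ((1 + sqrt 2) / 2) \<and>
    schur_norm_is [[1,0,0],[1,1,1],[0,0,1]] (1/15 * sqrt (169 + 38 * sqrt 19)) \<and>
    schur_norm_is [[1,0,0,1,0],[1,1,1,0,0],[0,0,1,0,1]] (1/15 * sqrt (169 + 38 * sqrt 19)) \<and>
    schur_norm_is [[1,1,0,0],[1,0,1,0],[1,0,0,1]] (sqrt (3/2)) \<and>
    schur_norm_is [[1,1,0,0],[0,1,1,0],[0,0,1,1],[0,0,0,1]] (2/5 * sqrt (5 + 2 * sqrt 5)) \<and>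
    schur_norm_is [[1,1,0,0,0],[0,1,1,0,0],[0,0,1,1,0],[0,0,0,1,1]] (2/5 * sqrt (5 + 2 * sqrt 5)) \<and>
    schur_norm_is [[1,1,0],[1,1,1],[0,1,0]] (1/15 * (9 + 4 * sqrt 6)) \<and>
    schur_norm_is [[1,1,0],[1,1,1],[0,1,1]] (9/7) \<and>
    schur_norm_is [[1,1,0],[1,0,1],[0,1,1]] (4/3)"
  proof -
  have h0: "schur_norm_is [[1]] 1"
    by (rule cert_sound[OF _ _ m1_up m1_lo _ _ csq0]) (simp_all add: shape_ok_def)
  have h1: "schur_norm_is [[1,1],[0,1]] (sqrt (4/3))"
    by (rule cert_sound[OF _ _ m2_up m2_lo _ _ csq1]) (simp_all add: shape_ok_def)
  have h2: "schur_norm_is [[1,1,0],[0,1,1]] (sqrt (4/3))"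
    by (rule cert_sound[OF _ _ m2b_up m2b_lo _ _ csq1]) (simp_all add: shape_ok_def)
  have h3: "schur_norm_is [[1,1,0],[0,1,1],[0,0,1]] ((1 + sqrt 2) / 2)"
    by (rule cert_sound[OF _ _ m3_up m3_lo _ _ csq2]) (simp_all add: shape_ok_def)
  have h4: "schur_norm_is [[1,1,0,0],[0,1,1,0],[0,0,1,1]] ((1 + sqrt 2) / 2)"
    by (rule cert_sound[OF _ _ m3b_up m3b_lo _ _ csq2]) (simp_all add: shape_ok_def)
  have h5: "schur_norm_is [[1,1,0,0],[1,0,1,0],[0,1,0,1],[0,0,1,1]] ((1 + sqrt 2) / 2)"
    by (rule cert_sound[OF _ _ m3c_up m3c_lo _ _ csq2]) (simp_all add: shape_ok_def)
  have h6: "schur_norm_is [[1,0,0],[1,1,1],[0,0,1]] (1/15 * sqrt (169 + 38 * sqrt 19))"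
    by (rule cert_sound[OF _ _ m4_up m4_lo _ _ csq3]) (simp_all add: shape_ok_def)
  have h7: "schur_norm_is [[1,0,0,1,0],[1,1,1,0,0],[0,0,1,0,1]] (1/15 * sqrt (169 + 38 * sqrt 19))"
    by (rule cert_sound[OF _ _ m4b_up m4b_lo _ _ csq3]) (simp_all add: shape_ok_def)
  have h8: "schur_norm_is [[1,1,0,0],[1,0,1,0],[1,0,0,1]] (sqrt (3/2))"
    by (rule cert_sound[OF _ _ m5_up m5_lo _ _ csq4]) (simp_all add: shape_ok_def)
  have h9: "schur_norm_is [[1,1,0,0],[0,1,1,0],[0,0,1,1],[0,0,0,1]] (2/5 * sqrt (5 + 2 * sqrt 5))"
    by (rule cert_sound[OF _ _ m6_up m6_lo _ _ csq5]) (simp_all add: shape_ok_def)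
  have h10: "schur_norm_is [[1,1,0,0,0],[0,1,1,0,0],[0,0,1,1,0],[0,0,0,1,1]] (2/5 * sqrt (5 + 2 * sqrt 5))"
    by (rule cert_sound[OF _ _ m6b_up m6b_lo _ _ csq5]) (simp_all add: shape_ok_def)
  have h11: "schur_norm_is [[1,1,0],[1,1,1],[0,1,0]] (1/15 * (9 + 4 * sqrt 6))"
    by (rule cert_sound[OF _ _ m7_up m7_lo _ _ csq6]) (simp_all add: shape_ok_def)
  have h12: "schur_norm_is [[1,1,0],[1,1,1],[0,1,1]] (9/7)"
    by (rule cert_sound[OF _ _ m8_up m8_lo _ _ csq7]) (simp_all add: shape_ok_def)
  have h13: "schur_norm_is [[1,1,0],[1,0,1],[0,1,1]] (4/3)"
    by (rule cert_sound[OF _ _ m9_up m9_lo _ _ csq8]) (simp_all add: shape_ok_def)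
  show ?thesis using h0 h1 h2 h3 h4 h5 h6 h7 h8 h9 h10 h11 h12 h13 by blast
qed

end
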